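(* Consider $\partial_t x = F_2 x^{\otimes 2}+F_1x+F_0$ with pivot $s$, let $Q$ be a positive definite matrix, $O=Q^\dagger Q$, $u(t)=x(t)-s$ and $v(t)=Qu(t)$. Suppose $F_{2,s}\neq0$, $\mu_O(F_{1,s})<0$ and $\mu_O(F_{1,s})^2-4\|F_{2,s}\|_O\|F_{0,s}\|_O>0$, and define $$r_\pm^O=\frac{-\mu_O(F_{1,s})\pm\sqrt{\mu_O(F_{1,s})^2-4\|F_{2,s}\|_O\|F_{0,s}\|_O}}{2\|F_{2,s}\|_O}.$$ Then for all $t\ge0$ in the interval of existence of the solution: if $\|u(0)\|_O=\|v(0)\|\in[r_-^O,r_+^O)$, then $\|u(t)\|_O=\|v(t)\|\le\|u(0)\|_O<r_+^O$; if $\|u(0)\|_O=\|v(0)\|\in[0,r_-^O)$, then $\|u(t)\|_O=\|v(t)\|<r_-^O$.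
   Context: Setting: $x(t)\in\mathbb{R}^n$, $F_2\in\mathbb{R}^{n\times n^2}$, $F_1\in\mathbb{R}^{n\times n}$, $F_0\in\mathbb{R}^n$, Kronecker product $\otimes$; $F_{2,s}=F_2$, $F_{1,s}=F_1+F_2(s\otimes I_n+I_n\otimes s)$, $F_{0,s}=F_2s^{\otimes2}+F_1s+F_0$. Norms: $\|\cdot\|$ Euclidean/operator norm; for $O\succ0$, $\|y\|_O=\sqrt{y^\dagger Oy}$ for vectors, $\|F\|_O=\|O^{1/2}FO^{-1/2}\|$ for $n\times n$ matrices, $\|G\|_O=\|O^{1/2}G(O^{-1/2}\otimes O^{-1/2})\|$ for $n\times n^2$ matrices; $\mu(F)=\frac12\lambda_{\max}(F+F^\dagger)$, $\mu_O(F)=\mu(O^{1/2}FO^{-1/2})$. *)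

theory Defs
  imports "HOL-Analysis.Analysis"
begin

text \<open>Real matrices are elements of type real^'c^'r (rows indexed by 'r).
  Vectors of R^(n^2) are indexed by the finite type 'n \<times> 'n (Kronecker index (i,j)).\<close>

definition pos_def :: "real^'n^'n \<Rightarrow> bool" where
  "pos_def A \<longleftrightarrow> transpose A = A \<and> (\<forall>x. x \<noteq> 0 \<longrightarrow> x \<bullet> (A *v x) > 0)"

text \<open>Positive definite square root Om^(1/2).\<close>
definition mat_sqrt :: "real^'n^'n \<Rightarrow> real^'n^'n" where
  "mat_sqrt Om = (THE S. pos_def S \<and> S ** S = Om)"

text \<open>Kronecker products.\<close>
definition vkron :: "real^'n \<Rightarrow> real^'m \<Rightarrow> real^('n \<times> 'm)" where
  "vkron x y = (\<chi> p. x $ fst p * y $ snd p)"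

definition mkron :: "real^'c1^'r1 \<Rightarrow> real^'c2^'r2 \<Rightarrow> real^('c1 \<times> 'c2)^('r1 \<times> 'r2)" where
  "mkron A B = (\<chi> p q. A $ fst p $ fst q * B $ snd p $ snd q)"

text \<open>s \<otimes> I_n and I_n \<otimes> s, with s a column vector (n^2 \<times> n matrices).\<close>
definition kron_vec_id :: "real^'n \<Rightarrow> real^'n^('n \<times> 'n)" where
  "kron_vec_id s = (\<chi> p k. s $ fst p * (mat 1 :: real^'n^'n) $ snd p $ k)"

definition kron_id_vec :: "real^'n \<Rightarrow> real^'n^('n \<times> 'n)" where
  "kron_id_vec s = (\<chi> p k. (mat 1 :: real^'n^'n) $ fst p $ k * s $ snd p)"

text \<open>Shifted coefficients.\<close>
definition F1s :: "real^('n \<times> 'n)^'n \<Rightarrow> real^'n^'n \<Rightarrow> real^'n \<Rightarrow> real^'n^'n" where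
  "F1s F2 F1 s = F1 + F2 ** (kron_vec_id s + kron_id_vec s)"

definition F0s :: "real^('n \<times> 'n)^'n \<Rightarrow> real^'n^'n \<Rightarrow> real^'n \<Rightarrow> real^'n \<Rightarrow> real^'n" where
  "F0s F2 F1 F0 s = F2 *v vkron s s + F1 *v s + F0"

text \<open>Largest eigenvalue and logarithmic norm mu(F) = 1/2 lambda_max(F + F^T).\<close>
definition lambda_max :: "real^'n^'n \<Rightarrow> real" where
  "lambda_max A = Max {l. \<exists>v. v \<noteq> 0 \<and> A *v v = l *\<^sub>R v}"

definition mu :: "real^'n^'n \<Rightarrow> real" where
  "mu F = lambda_max (F + transpose F) / 2"

definition muO :: "real^'n^'n \<Rightarrow> real^'n^'n \<Rightarrow> real" where
  "muO Om F = mu (mat_sqrt Om ** F ** matrix_inv (mat_sqrt Om))"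

text \<open>Weighted norms.\<close>
definition vnormO :: "real^'n^'n \<Rightarrow> real^'n \<Rightarrow> real" where
  "vnormO Om y = sqrt (y \<bullet> (Om *v y))"

definition mnormO :: "real^'n^'n \<Rightarrow> real^'n^'n \<Rightarrow> real" where
  "mnormO Om F = onorm (\<lambda>y. (mat_sqrt Om ** F ** matrix_inv (mat_sqrt Om)) *v y)"

definition tnormO :: "real^'n^'n \<Rightarrow> real^('n \<times> 'n)^'n \<Rightarrow> real" where
  "tnormO Om G = onorm (\<lambda>y. (mat_sqrt Om ** G **
      mkron (matrix_inv (mat_sqrt Om)) (matrix_inv (mat_sqrt Om))) *v y)"

end

theory Submission
  imports Defs
begin

lemma barrier:
  fixes f f' :: "real \<Rightarrow> real"
  assumes J: "is_interval J" "0 \<in> J"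
    and der: "\<And>t. t \<in> J \<Longrightarrow> (f has_real_derivative f' t) (at t within J)"
    and f0: "f 0 \<le> b" and ep: "\<epsilon> > 0"
    and neg: "\<And>t. t \<in> J \<Longrightarrow> t \<ge> 0 \<Longrightarrow> b < f t \<Longrightarrow> f t < b + \<epsilon> \<Longrightarrow> f' t \<le> 0"
    and t1: "t1 \<in> J" "t1 \<ge> 0"
  shows "f t1 \<le> b"
proof (rule ccontr)
  assume "\<not> f t1 \<le> b"
  hence ft1: "f t1 > b" by simp
  define c where "c = (b + min (f t1) (b + \<epsilon>)) / 2"
  have cb: "b < c" "c < f t1" "c < b + \<epsilon>" using ft1 ep by (auto simp: c_def)
  have sub: "{0..t1} \<subseteq> J" using J t1 unfolding is_interval_1 by (metis atLeastAtMost_iff subsetI)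
  have cont: "continuous_on J f"
    using der DERIV_continuous continuous_on_eq_continuous_within by blast
  define S where "S = {0..t1} \<inter> f -` {..c}"
  have clS: "closed S" unfolding S_def
    by (rule continuous_closed_preimage) (auto intro: continuous_on_subset[OF cont sub])
  have S0: "0 \<in> S" using f0 cb t1 by (auto simp: S_def)
  have bdS: "bdd_above S" unfolding S_def by (rule bdd_aboveI[of _ t1]) auto
  define t0 where "t0 = Sup S"
  have t0S: "t0 \<in> S" unfolding t0_def using clS S0 bdS using closed_contains_Sup by blast
  have t0le: "t0 \<le> t1" "0 \<le> t0" "f t0 \<le> c" using t0S by (auto simp: S_def)
  have t0lt: "t0 < t1" using t0le cb by (smt (verit))
  have above: "f t > c" if "t0 < t" "t \<le> t1" for t
  proof (rule ccontr)
    assume "\<not> c < f t"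
    hence "t \<in> S" using that t0le by (auto simp: S_def)
    hence "t \<le> t0" unfolding t0_def using bdS by (rule cSup_upper)
    thus False using that by simp
  qed
  have t0J: "t0 \<in> J" using sub t0le by auto
  have "continuous (at t0 within J) f" using der[OF t0J] by (rule DERIV_continuous)
  hence "(f \<longlongrightarrow> f t0) (at t0 within J)" by (simp add: continuous_within)
  hence "\<forall>\<^sub>F t in at t0 within J. f t < b + \<epsilon>" using t0le cb by (intro order_tendstoD(2)[of f "f t0"]) auto
  then obtain d where d: "d > 0" "\<And>t. t \<in> J \<Longrightarrow> t \<noteq> t0 \<Longrightarrow> dist t t0 < d \<Longrightarrow> f t < b + \<epsilon>"
    by (auto simp: eventually_at)
  define t' where "t' = min t1 (t0 + d/2)"
  have t': "t0 < t'" "t' \<le> t1" "t' < t0 + d" using d t0lt by (auto simp: t'_def)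
  have "\<exists>z\<in>{t0<..<t'}. f t' - f t0 = (*) (f' z) (t' - t0)"
  proof (rule mvt_simple[OF t'(1)])
    fix z assume "t0 \<le> z" "z \<le> t'"
    hence "{t0..t'} \<subseteq> J" "z \<in> J" using sub t0le t' by auto
    thus "(f has_derivative (*) (f' z)) (at z within {t0..t'})"
      using has_field_derivative_subset[OF der[of z]] unfolding has_field_derivative_def
      by blast
  qed
  then obtain z where z: "t0 < z" "z < t'" "f t' - f t0 = f' z * (t' - t0)" by auto
  have zJ: "z \<in> J" using sub z t0le t' by auto
  have "f z > c" using above z t' by auto
  moreover have "f z < b + \<epsilon>" using d(2)[OF zJ] z t' by (auto simp: dist_real_def)
  ultimately have "f' z \<le> 0" using neg[OF zJ] z t0le cb by auto
  hence "f t' \<le> f t0" using z mult_nonpos_nonneg[of "f' z" "t' - t0"] by simp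
  moreover have "f t' > c" using above t' by auto
  ultimately show False using t0le by simp
qed

lemma sym_inner:
  fixes B :: "real^'n^'n"
  assumes "transpose B = B"
  shows "x \<bullet> (B *v y) = (B *v x) \<bullet> y"
proof -
  have "x \<bullet> (B *v y) = (x v* B) \<bullet> y" by (simp add: dot_lmul_matrix)
  also have "x v* B = B *v x" using vector_transpose_matrix[of x B] assms by simp
  finally show ?thesis .
qed

lemma mv_scale: "(B::real^'n^'m) *v (c *\<^sub>R x) = c *\<^sub>R (B *v x)"
  by (rule matrix_vector_mult_scaleR)

lemma quad_zero:
  fixes a b :: real
  assumes "\<And>e. 2 * e * a + e^2 * b \<le> 0" "a \<ge> 0"
  shows "a = 0"
proof (rule ccontr)
  assume "a \<noteq> 0" hence a: "a > 0" using assms by simp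
  define e where "e = a / (\<bar>b\<bar> + 1)"
  have e: "e > 0" using a by (simp add: e_def)
  have "e * \<bar>b\<bar> < a" using a by (simp add: e_def field_simps)
  moreover have "e * (- \<bar>b\<bar>) \<le> e * b" using e by (intro mult_left_mono) auto
  ultimately have "2 * a + e * b > 0" using a by linarith
  hence "e * (2 * a + e * b) > 0" using e by simp
  moreover have "e * (2 * a + e * b) = 2 * e * a + e^2 * b" by (simp add: power2_eq_square algebra_simps)
  ultimately show False using assms(1)[of e] by simp
qed

lemma rayleigh:
  fixes B :: "real^'n^'n"
  assumes sym: "transpose B = B"
  shows "\<exists>M v0. v0 \<noteq> 0 \<and> B *v v0 = M *\<^sub>R v0 \<and> (\<forall>v. v \<bullet> (B *v v) \<le> M * (v \<bullet> v))"
proof -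
  define \<phi> where "\<phi> = (\<lambda>v::real^'n. v \<bullet> (B *v v))"
  have cont: "continuous_on (sphere 0 1) \<phi>" unfolding \<phi>_def
    by (intro continuous_intros linear_continuous_on matrix_vector_mul_bounded_linear)
  obtain w :: "real^'n" where "norm w = 1" using vector_choose_size[of 1] by auto
  hence ne: "sphere (0::real^'n) 1 \<noteq> {}" by auto
  obtain v0 where v0: "v0 \<in> sphere 0 1" "\<And>y. y \<in> sphere 0 1 \<Longrightarrow> \<phi> y \<le> \<phi> v0"
    using continuous_attains_sup[OF compact_sphere ne cont] by blast
  define M where "M = \<phi> v0"
  have nv0: "norm v0 = 1" using v0 by simp
  have v00: "v0 \<bullet> v0 = 1" using nv0 by (simp add: dot_square_norm)
  have scl: "\<phi> (c *\<^sub>R v) = c^2 * \<phi> v" for c v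
    by (simp add: \<phi>_def mv_scale power2_eq_square)
  have bound: "\<phi> v \<le> M * (v \<bullet> v)" for v
  proof (cases "v = 0")
    case True thus ?thesis by (simp add: \<phi>_def)
  next
    case False
    hence n: "norm v > 0" by simp
    have "\<phi> ((1 / norm v) *\<^sub>R v) \<le> M" unfolding M_def using False by (intro v0(2)) simp
    hence "(1 / norm v)^2 * \<phi> v \<le> M" by (simp add: scl)
    hence "\<phi> v \<le> M * (norm v)^2" using n by (simp add: field_simps)
    thus ?thesis by (simp add: dot_square_norm)
  qed
  define r where "r = B *v v0 - M *\<^sub>R v0"
  define \<beta> where "\<beta> = \<phi> r - M * (r \<bullet> r)"
  have "2 * e * (r \<bullet> r) + e^2 * \<beta> \<le> 0" for e
  proof -
    have "\<phi> (v0 + e *\<^sub>R r) \<le> M * ((v0 + e *\<^sub>R r) \<bullet> (v0 + e *\<^sub>R r))" by (rule bound)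
    moreover have "\<phi> (v0 + e *\<^sub>R r) = M + 2 * e * (r \<bullet> (B *v v0)) + e^2 * \<phi> r"
    proof -
      have "\<phi> (v0 + e *\<^sub>R r) = v0 \<bullet> (B *v v0) + e * (v0 \<bullet> (B *v r)) + e * (r \<bullet> (B *v v0)) + e^2 * \<phi> r"
        by (simp add: \<phi>_def matrix_vector_right_distrib mv_scale inner_add_left inner_add_right power2_eq_square algebra_simps)
      moreover have "v0 \<bullet> (B *v r) = r \<bullet> (B *v v0)" using sym_inner[OF sym] by (simp add: inner_commute)
      ultimately show ?thesis by (simp add: M_def \<phi>_def)
    qed
    moreover have "(v0 + e *\<^sub>R r) \<bullet> (v0 + e *\<^sub>R r) = 1 + 2 * e * (r \<bullet> v0) + e^2 * (r \<bullet> r)"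
      using v00 by (simp add: inner_add_left inner_add_right power2_eq_square algebra_simps inner_commute)
    moreover have "r \<bullet> (B *v v0) - M * (r \<bullet> v0) = r \<bullet> r"
      by (simp add: r_def inner_diff_right algebra_simps)
    ultimately have "M + 2 * e * (r \<bullet> (B *v v0)) + e^2 * \<phi> r \<le> M * (1 + 2 * e * (r \<bullet> v0) + e^2 * (r \<bullet> r))"
      by simp
    moreover have "M * (1 + 2 * e * (r \<bullet> v0) + e^2 * (r \<bullet> r)) - (M + 2 * e * (r \<bullet> (B *v v0)) + e^2 * \<phi> r)
       = - (2 * e * (r \<bullet> (B *v v0) - M * (r \<bullet> v0)) + e^2 * \<beta>)" unfolding \<beta>_def by (simp add: algebra_simps)
    ultimately show ?thesis using \<open>r \<bullet> (B *v v0) - M * (r \<bullet> v0) = r \<bullet> r\<close> by simp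
  qed
  hence "r \<bullet> r = 0" by (intro quad_zero) auto
  hence "B *v v0 = M *\<^sub>R v0" by (simp add: r_def)
  moreover have "v0 \<noteq> 0" using nv0 by auto
  ultimately show ?thesis using bound unfolding \<phi>_def by blast
qed

lemma eig_finite:
  fixes B :: "real^'n^'n"
  assumes sym: "transpose B = B"
  shows "finite {l. \<exists>v. v \<noteq> 0 \<and> B *v v = l *\<^sub>R v}" (is "finite ?E")
proof (rule ccontr)
  assume "infinite ?E"
  then obtain F where F: "finite F" "card F = Suc DIM(real^'n)" "F \<subseteq> ?E"
    using infinite_arbitrarily_large by blast
  define g where "g l = (SOME v. v \<noteq> 0 \<and> B *v v = l *\<^sub>R v)" for l
  have g: "g l \<noteq> 0 \<and> B *v g l = l *\<^sub>R g l" if "l \<in> ?E" for l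
  proof -
    have "\<exists>v. v \<noteq> 0 \<and> B *v v = l *\<^sub>R v" using that by simp
    thus ?thesis unfolding g_def by (rule someI_ex)
  qed
  have orth: "g l1 \<bullet> g l2 = 0" if "l1 \<in> ?E" "l2 \<in> ?E" "l1 \<noteq> l2" for l1 l2
  proof -
    have "l2 * (g l1 \<bullet> g l2) = g l1 \<bullet> (B *v g l2)" using g[OF that(2)] by simp
    also have "\<dots> = (B *v g l1) \<bullet> g l2" by (rule sym_inner[OF sym])
    also have "\<dots> = l1 * (g l1 \<bullet> g l2)" using g[OF that(1)] by simp
    finally show ?thesis using that(3) by simp
  qed
  have inj: "inj_on g F"
  proof (rule inj_onI)
    fix l1 l2 assume "l1 \<in> F" "l2 \<in> F" "g l1 = g l2"
    show "l1 = l2"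
    proof (rule ccontr)
      assume ne: "l1 \<noteq> l2"
      have E: "l1 \<in> ?E" "l2 \<in> ?E" using F(3) \<open>l1 \<in> F\<close> \<open>l2 \<in> F\<close> by auto
      have "g l1 \<bullet> g l2 = 0" using E ne by (rule orth)
      hence "g l1 = 0" using \<open>g l1 = g l2\<close> by simp
      thus False using g[OF E(1)] by simp
    qed
  qed
  have "pairwise orthogonal (g ` F)"
    unfolding pairwise_def orthogonal_def
  proof (intro ballI impI)
    fix x y assume "x \<in> g ` F" "y \<in> g ` F" "x \<noteq> y"
    then obtain l1 l2 where l: "l1 \<in> F" "l2 \<in> F" "x = g l1" "y = g l2" by blast
    hence "l1 \<noteq> l2" using \<open>x \<noteq> y\<close> by blast
    thus "x \<bullet> y = 0" using l F(3) orth by blast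
  qed
  moreover have "0 \<notin> g ` F"
  proof
    assume "0 \<in> g ` F" then obtain l where "l \<in> F" "g l = 0" by (metis imageE)
    thus False using g[of l] F(3) by auto
  qed
  ultimately have "independent (g ` F)" by (rule pairwise_orthogonal_independent)
  hence "card (g ` F) \<le> DIM(real^'n)" using independent_bound by blast
  moreover have "card (g ` F) = card F" using inj by (rule card_image)
  ultimately show False using F(2) by simp
qed

lemma rayleigh_lmax:
  fixes B :: "real^'n^'n"
  assumes sym: "transpose B = B"
  shows "v \<bullet> (B *v v) \<le> lambda_max B * (v \<bullet> v)"
proof -
  obtain M v0 where M: "v0 \<noteq> 0" "B *v v0 = M *\<^sub>R v0" "\<And>v. v \<bullet> (B *v v) \<le> M * (v \<bullet> v)"
    using rayleigh[OF sym] by blast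
  have "M \<le> lambda_max B" unfolding lambda_max_def
    by (rule Max_ge[OF eig_finite[OF sym]]) (use M in blast)
  hence "M * (v \<bullet> v) \<le> lambda_max B * (v \<bullet> v)" by (intro mult_right_mono) auto
  thus ?thesis using M(3)[of v] by linarith
qed

lemma form_le_zero:
  fixes D :: "real^'n^'n"
  assumes sym: "transpose D = D"
    and noeig: "\<And>w l. w \<noteq> 0 \<Longrightarrow> D *v w = l *\<^sub>R w \<Longrightarrow> l = 0"
  shows "v \<bullet> (D *v v) \<le> 0"
proof -
  obtain M v0 where M: "v0 \<noteq> 0" "D *v v0 = M *\<^sub>R v0" "\<And>v. v \<bullet> (D *v v) \<le> M * (v \<bullet> v)"
    using rayleigh[OF sym] by blast
  have "M = 0" using noeig[OF M(1,2)] .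
  thus ?thesis using M(3)[of v] by simp
qed

lemma sym_zero:
  fixes D :: "real^'n^'n"
  assumes sym: "transpose D = D"
    and noeig: "\<And>w l. w \<noteq> 0 \<Longrightarrow> D *v w = l *\<^sub>R w \<Longrightarrow> l = 0"
  shows "D = 0"
proof -
  define D' where "D' = (-1::real) *\<^sub>R D"
  have D'v: "D' *v v = - (D *v v)" for v
    unfolding D'_def using scaleR_matrix_vector_assoc[of "-1" D v] by simp
  have symD': "transpose D' = D'" unfolding D'_def by (subst transpose_scalar) (simp only: sym)
  have noeig': "l = 0" if "w \<noteq> 0" "D' *v w = l *\<^sub>R w" for w l
  proof -
    have "D *v w = (-l) *\<^sub>R w" using that(2) D'v[of w] by (metis minus_minus scaleR_minus_left)
    from noeig[OF that(1) this] show ?thesis by simp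
  qed
  have z: "v \<bullet> (D *v v) = 0" for v
  proof -
    have "v \<bullet> (D *v v) \<le> 0" by (rule form_le_zero) (auto intro: sym noeig)
    moreover have "v \<bullet> (D' *v v) \<le> 0" by (rule form_le_zero) (auto intro: symD' noeig')
    ultimately show ?thesis using D'v[of v] by simp
  qed
  have "D *v y = 0" for y
  proof -
    have "(D *v y + y) \<bullet> (D *v (D *v y + y)) = (D *v y) \<bullet> (D *v (D *v y)) + 2 * ((D *v y) \<bullet> (D *v y)) + y \<bullet> (D *v y)"
      using sym_inner[OF sym, of y "D *v y"]
      by (simp add: matrix_vector_right_distrib inner_add_left inner_add_right inner_commute)
    hence "(D *v y) \<bullet> (D *v y) = 0" using z by simp
    thus ?thesis by simp
  qed
  thus "D = 0" by (simp add: matrix_eq)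
qed

lemma pos_def_sym: "pos_def A \<Longrightarrow> transpose A = A" by (simp add: pos_def_def)

lemma sqrt_unique:
  fixes Q S :: "real^'n^'n"
  assumes Q: "pos_def Q" and S: "pos_def S" and eq: "S ** S = Q ** Q"
  shows "S = Q"
proof -
  define D where "D = S - Q"
  have symD: "transpose D = D" using pos_def_sym[OF Q] pos_def_sym[OF S]
    by (simp add: D_def transpose_def vec_eq_iff)
  have key: "S *v (D *v w) + D *v (Q *v w) = 0" for w
  proof -
    have "S *v (S *v w) = Q *v (Q *v w)" using eq by (simp add: matrix_vector_mul_assoc)
    thus ?thesis by (simp add: D_def matrix_vector_mult_diff_rdistrib matrix_vector_mult_diff_distrib)
  qed
  have "l = 0" if w: "w \<noteq> 0" "D *v w = l *\<^sub>R w" for w l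
  proof -
    have "w \<bullet> (S *v (D *v w) + D *v (Q *v w)) = 0" using key[of w] by simp
    hence "w \<bullet> (S *v (D *v w)) + w \<bullet> (D *v (Q *v w)) = 0" by (simp only: inner_add_right)
    moreover have "w \<bullet> (S *v (D *v w)) = l * (w \<bullet> (S *v w))" using w by (simp add: matrix_vector_mult_scaleR)
    moreover have "w \<bullet> (D *v (Q *v w)) = l * (w \<bullet> (Q *v w))"
    proof -
      have "w \<bullet> (D *v (Q *v w)) = (D *v w) \<bullet> (Q *v w)" by (rule sym_inner[OF symD])
      also have "\<dots> = l * (w \<bullet> (Q *v w))" using w(2) by simp
      finally show ?thesis .
    qed
    ultimately have "l * (w \<bullet> (S *v w) + w \<bullet> (Q *v w)) = 0" by (simp add: algebra_simps)
    moreover have "w \<bullet> (S *v w) > 0" "w \<bullet> (Q *v w) > 0" using S Q w(1) by (auto simp: pos_def_def)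
    ultimately show ?thesis by simp
  qed
  hence "D = 0" by (intro sym_zero[OF symD]) auto
  thus ?thesis by (simp add: D_def)
qed

lemma mat_sqrt_eq:
  fixes Q :: "real^'n^'n"
  assumes Q: "pos_def Q"
  shows "mat_sqrt (transpose Q ** Q) = Q"
  unfolding mat_sqrt_def
proof (rule the_equality)
  show "pos_def Q \<and> Q ** Q = transpose Q ** Q" using Q pos_def_sym[OF Q] by simp
  fix S assume "pos_def S \<and> S ** S = transpose Q ** Q"
  thus "S = Q" using sqrt_unique[OF Q] pos_def_sym[OF Q] by simp
qed

lemma kron_vec_id_mult: "kron_vec_id s *v u = vkron s u"
  by (simp add: kron_vec_id_def vkron_def matrix_vector_mult_def mat_def vec_eq_iff
      if_distrib if_distribR sum.delta cong del: if_weak_cong)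

lemma kron_id_vec_mult: "kron_id_vec s *v u = vkron u s"
  by (simp add: kron_id_vec_def vkron_def matrix_vector_mult_def mat_def vec_eq_iff
      if_distrib if_distribR sum.delta mult.commute cong del: if_weak_cong)

lemma vkron_expand: "vkron (u + s) (u + s) = vkron u u + vkron s u + vkron u s + vkron s s"
  by (simp add: vkron_def vec_eq_iff algebra_simps)

lemma sum_prod_univ: "(\<Sum>q\<in>(UNIV::('a::finite \<times> 'b::finite) set). f (fst q) (snd q)) = (\<Sum>i\<in>UNIV. \<Sum>j\<in>UNIV. f i j)"
  by (subst sum.cartesian_product) (simp add: case_prod_beta)

lemma mkron_vkron: "mkron A B *v vkron x y = vkron (A *v x) (B *v y)"
proof -
  have "(mkron A B *v vkron x y) $ p = vkron (A *v x) (B *v y) $ p" for p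
  proof -
    have "(mkron A B *v vkron x y) $ p = (\<Sum>q\<in>UNIV. (A $ fst p $ fst q * x $ fst q) * (B $ snd p $ snd q * y $ snd q))"
      by (simp add: mkron_def vkron_def matrix_vector_mult_def algebra_simps)
    also have "\<dots> = (\<Sum>i\<in>UNIV. \<Sum>j\<in>UNIV. (A $ fst p $ i * x $ i) * (B $ snd p $ j * y $ j))"
      by (rule sum_prod_univ)
    also have "\<dots> = (\<Sum>i\<in>UNIV. A $ fst p $ i * x $ i) * (\<Sum>j\<in>UNIV. B $ snd p $ j * y $ j)"
      by (simp add: sum_product)
    also have "\<dots> = vkron (A *v x) (B *v y) $ p"
      by (simp add: vkron_def matrix_vector_mult_def)
    finally show ?thesis .
  qed
  thus ?thesis by (simp add: vec_eq_iff)
qed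

lemma vkron_inner: "vkron a b \<bullet> vkron c d = (a \<bullet> c) * (b \<bullet> d)"
proof -
  have "vkron a b \<bullet> vkron c d = (\<Sum>q\<in>UNIV. (a $ fst q * c $ fst q) * (b $ snd q * d $ snd q))"
    by (simp add: inner_vec_def vkron_def algebra_simps)
  also have "\<dots> = (\<Sum>i\<in>UNIV. \<Sum>j\<in>UNIV. (a $ i * c $ i) * (b $ j * d $ j))"
    by (rule sum_prod_univ)
  also have "\<dots> = (a \<bullet> c) * (b \<bullet> d)"
    by (simp add: sum_product inner_vec_def)
  finally show ?thesis .
qed

lemma norm_vkron: "norm (vkron v v) = norm v ^ 2"
proof -
  have "norm (vkron v v) = sqrt ((v \<bullet> v) * (v \<bullet> v))" by (simp add: norm_eq_sqrt_inner vkron_inner)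
  also have "\<dots> = v \<bullet> v" by simp
  finally show ?thesis by (simp add: dot_square_norm)
qed

lemma vnormO_eq: "vnormO (transpose Q ** Q) y = norm (Q *v y)"
proof -
  have "y \<bullet> ((transpose Q ** Q) *v y) = (Q *v y) \<bullet> (Q *v y)"
  proof -
    have "y \<bullet> ((transpose Q ** Q) *v y) = y \<bullet> ((Q *v y) v* Q)"
      by (simp add: matrix_vector_mul_assoc[symmetric])
    also have "\<dots> = ((Q *v y) v* Q) \<bullet> y" by (rule inner_commute)
    also have "\<dots> = (Q *v y) \<bullet> (Q *v y)" by (rule dot_lmul_matrix)
    finally show ?thesis .
  qed
  thus ?thesis by (simp add: vnormO_def norm_eq_sqrt_inner)
qed

lemma transpose_add_sym: "transpose (A + transpose A) = A + transpose (A::real^'n^'n)"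
  by (simp add: transpose_def vec_eq_iff add.commute)

lemma mu_bound:
  fixes A :: "real^'n^'n"
  shows "v \<bullet> (A *v v) \<le> mu A * (v \<bullet> v)"
proof -
  have "v \<bullet> (transpose A *v v) = v \<bullet> (A *v v)"
  proof -
    have "v \<bullet> (transpose A *v v) = (v v* A) \<bullet> v" by (simp add: inner_commute)
    also have "\<dots> = v \<bullet> (A *v v)" by (rule dot_lmul_matrix)
    finally show ?thesis .
  qed
  hence "v \<bullet> ((A + transpose A) *v v) = 2 * (v \<bullet> (A *v v))"
    by (simp add: matrix_vector_mult_add_rdistrib inner_add_right)
  moreover have "v \<bullet> ((A + transpose A) *v v) \<le> lambda_max (A + transpose A) * (v \<bullet> v)"
    by (rule rayleigh_lmax[OF transpose_add_sym])
  ultimately show ?thesis by (simp add: mu_def)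
qed

lemma Q_inv:
  fixes Q :: "real^'n^'n"
  assumes "pos_def Q"
  shows "Q ** matrix_inv Q = mat 1 \<and> matrix_inv Q ** Q = mat 1"
proof -
  have "\<forall>x. Q *v x = 0 \<longrightarrow> x = 0"
    using assms unfolding pos_def_def by (metis inner_zero_right less_irrefl)
  hence "invertible Q" by (simp add: invertible_left_inverse matrix_left_invertible_ker)
  hence "\<exists>A'. Q ** A' = mat 1 \<and> A' ** Q = mat 1" by (simp add: invertible_def)
  thus ?thesis unfolding matrix_inv_def by (rule someI_ex)
qed

theorem lemma5:
  fixes F2 :: "real^('n \<times> 'n)^'n" and F1 Q Om :: "real^'n^'n" and F0 s :: "real^'n"
    and x u v :: "real \<Rightarrow> real^'n" and J :: "real set" and r_plus r_minus :: real
  assumes J: "is_interval J" "0 \<in> J"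
    and ode: "\<forall>t\<in>J. (x has_vector_derivative (F2 *v vkron (x t) (x t) + F1 *v x t + F0)) (at t within J)"
    and Q: "pos_def Q"
    and O_def: "Om = transpose Q ** Q"
    and u_def: "u = (\<lambda>t. x t - s)"
    and v_def: "v = (\<lambda>t. Q *v u t)"
    and F2s_nz: "F2 \<noteq> 0"
    and mu_neg: "muO Om (F1s F2 F1 s) < 0"
    and disc: "(muO Om (F1s F2 F1 s))\<^sup>2 - 4 * tnormO Om F2 * vnormO Om (F0s F2 F1 F0 s) > 0"
    and r_plus_def: "r_plus = (- muO Om (F1s F2 F1 s) + sqrt ((muO Om (F1s F2 F1 s))\<^sup>2
                        - 4 * tnormO Om F2 * vnormO Om (F0s F2 F1 F0 s))) / (2 * tnormO Om F2)"
    and r_minus_def: "r_minus = (- muO Om (F1s F2 F1 s) - sqrt ((muO Om (F1s F2 F1 s))\<^sup>2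
                        - 4 * tnormO Om F2 * vnormO Om (F0s F2 F1 F0 s))) / (2 * tnormO Om F2)"
  shows "\<forall>t\<in>J. t \<ge> 0 \<longrightarrow>
     ((r_minus \<le> vnormO Om (u 0) \<and> vnormO Om (u 0) < r_plus \<longrightarrow>
         vnormO Om (u t) = norm (v t) \<and> norm (v t) \<le> vnormO Om (u 0) \<and> vnormO Om (u 0) < r_plus) \<and>
      (0 \<le> vnormO Om (u 0) \<and> vnormO Om (u 0) < r_minus \<longrightarrow>
         vnormO Om (u t) = norm (v t) \<and> norm (v t) < r_minus))"
proof -
  define Qi where "Qi = matrix_inv Q"
  have QQi: "Q ** Qi = mat 1" "Qi ** Q = mat 1" using Q_inv[OF Q] by (auto simp: Qi_def)
  have sqrtO: "mat_sqrt Om = Q" using mat_sqrt_eq[OF Q] O_def by simp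
  define G where "G = Q ** F2 ** mkron Qi Qi"
  define A where "A = Q ** F1s F2 F1 s ** Qi"
  define F0' where "F0' = F0s F2 F1 F0 s"
  define a where "a = tnormO Om F2"
  define m where "m = muO Om (F1s F2 F1 s)"
  define c where "c = vnormO Om F0'"
  have a_eq: "a = onorm ((*v) G)" by (simp add: a_def tnormO_def sqrtO G_def Qi_def)
  have m_eq: "m = mu A" by (simp add: m_def muO_def sqrtO A_def Qi_def)
  have c_eq: "c = norm (Q *v F0')" using vnormO_eq O_def c_def by simp
  have nv: "vnormO Om (u t) = norm (v t)" for t using vnormO_eq v_def O_def by simp
  have a0: "a \<ge> 0" unfolding a_eq by (rule onorm_pos_le[OF matrix_vector_mul_bounded_linear])
  have c0: "c \<ge> 0" by (simp add: c_eq)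
  have m0: "m < 0" using mu_neg by (simp add: m_def)
  have disc': "m^2 - 4 * a * c > 0" using disc by (simp add: m_def a_def c_def F0'_def)
  have rp: "r_plus = (- m + sqrt (m^2 - 4 * a * c)) / (2 * a)"
    using r_plus_def by (simp add: m_def a_def c_def F0'_def)
  have rm: "r_minus = (- m - sqrt (m^2 - 4 * a * c)) / (2 * a)"
    using r_minus_def by (simp add: m_def a_def c_def F0'_def)
  define r0 where "r0 = norm (v 0)"
  have r0nv: "vnormO Om (u 0) = r0" by (simp add: nv r0_def)
  show ?thesis
  proof (cases "a = 0")
    case True
    hence "r_plus = 0" "r_minus = 0" using rp rm by auto
    thus ?thesis by auto
  next
    case False
    hence apos: "a > 0" using a0 by simp
    define sq where "sq = sqrt (m^2 - 4 * a * c)"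
    have sqpos: "sq > 0" using disc' by (simp add: sq_def)
    have sq2: "sq^2 = m^2 - 4 * a * c" using disc' by (simp add: sq_def)
    have sqle: "sq \<le> - m"
    proof -
      have "sq \<le> sqrt (m^2)" unfolding sq_def using apos c0 by (intro real_sqrt_le_mono) simp
      thus ?thesis using m0 by simp
    qed
    have rp': "r_plus = (- m + sq) / (2 * a)" using rp by (simp add: sq_def)
    have rm': "r_minus = (- m - sq) / (2 * a)" using rm by (simp add: sq_def)
    have rm0: "r_minus \<ge> 0" using rm' sqle apos by simp
    have rmp: "r_minus < r_plus" using rm' rp' sqpos apos by (simp add: divide_strict_right_mono)
    have sumr: "a * (r_minus + r_plus) = - m" using rm' rp' apos by (simp add: field_simps)
    have prodr: "a * (r_minus * r_plus) = c"
    proof -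
      have e1: "2 * a * r_minus = - m - sq" using rm' apos by (simp add: field_simps)
      have e2: "2 * a * r_plus = - m + sq" using rp' apos by (simp add: field_simps)
      have "(2 * a * r_minus) * (2 * a * r_plus) = m^2 - sq^2"
        unfolding e1 e2 by (simp add: power2_eq_square algebra_simps)
      also have "\<dots> = 4 * a * c" using sq2 by simp
      finally have "(4 * a) * (a * (r_minus * r_plus)) = (4 * a) * c" by (simp add: algebra_simps)
      thus ?thesis using apos by simp
    qed
    have poly: "a * r^2 + m * r + c = a * ((r - r_minus) * (r - r_plus))" for r
    proof -
      have "a * ((r - r_minus) * (r - r_plus)) = a * r^2 - a * (r_minus + r_plus) * r + a * (r_minus * r_plus)"
        by (simp add: algebra_simps power2_eq_square)
      thus ?thesis using sumr prodr by simp
    qed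
    define x' where "x' t = F2 *v vkron (x t) (x t) + F1 *v x t + F0" for t
    define N where "N t = v t \<bullet> v t" for t
    define N' where "N' t = 2 * (v t \<bullet> (Q *v x' t))" for t
    have vder: "(v has_vector_derivative Q *v x' t) (at t within J)" if "t \<in> J" for t
    proof -
      have "((\<lambda>t. x t - s) has_vector_derivative x' t - 0) (at t within J)"
        using ode that by (intro has_vector_derivative_diff) (auto simp: x'_def)
      hence "((\<lambda>t. Q *v (x t - s)) has_vector_derivative Q *v x' t) (at t within J)"
        using bounded_linear.has_vector_derivative[OF matrix_vector_mul_bounded_linear[of Q]] by simp
      thus ?thesis by (simp add: v_def u_def)
    qed
    have Nder: "(N has_real_derivative N' t) (at t within J)" if "t \<in> J" for t
    proof -
      have "((\<lambda>t. v t \<bullet> v t) has_vector_derivative (v t \<bullet> (Q *v x' t) + (Q *v x' t) \<bullet> v t)) (at t within J)"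
        by (rule bounded_bilinear.has_vector_derivative[OF bounded_bilinear_inner vder[OF that] vder[OF that]])
      thus ?thesis unfolding has_real_derivative_iff_has_vector_derivative N_def N'_def
        by (simp add: inner_commute)
    qed
    have ident: "Q *v x' t = G *v vkron (v t) (v t) + A *v v t + Q *v F0'" for t
    proof -
      have ut: "Qi *v v t = u t" by (simp add: v_def matrix_vector_mul_assoc QQi)
      have g: "G *v vkron (v t) (v t) = Q *v (F2 *v vkron (u t) (u t))"
        by (simp add: G_def matrix_vector_mul_assoc[symmetric] mkron_vkron ut)
      have av: "A *v v t = Q *v (F1 *v u t + F2 *v (vkron s (u t) + vkron (u t) s))"
        by (simp add: A_def matrix_vector_mul_assoc[symmetric] ut F1s_def matrix_vector_mult_add_rdistrib
            matrix_vector_right_distrib kron_vec_id_mult kron_id_vec_mult)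
      have xt: "x t = u t + s" by (simp add: u_def)
      have "x' t = F2 *v vkron (u t) (u t) + (F1 *v u t + F2 *v (vkron s (u t) + vkron (u t) s)) + F0'"
        by (simp add: x'_def xt vkron_expand F0'_def F0s_def matrix_vector_right_distrib algebra_simps)
      thus ?thesis by (simp add: g av matrix_vector_right_distrib)
    qed
    have Nbound: "N' t \<le> 2 * (norm (v t) * (a * norm (v t)^2 + m * norm (v t) + c))" for t
    proof -
      define r where "r = norm (v t)"
      have r0': "r \<ge> 0" by (simp add: r_def)
      have "v t \<bullet> (G *v vkron (v t) (v t)) \<le> r * norm (G *v vkron (v t) (v t))"
        unfolding r_def by (rule norm_cauchy_schwarz)
      also have "\<dots> \<le> r * (a * norm (vkron (v t) (v t)))"
        using r0' onorm[OF matrix_vector_mul_bounded_linear, of G] a_eq by (intro mult_left_mono) auto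
      finally have t1: "v t \<bullet> (G *v vkron (v t) (v t)) \<le> a * r^3" by (simp add: norm_vkron r_def power3_eq_cube power2_eq_square algebra_simps)
      have t2: "v t \<bullet> (A *v v t) \<le> m * r^2"
        using mu_bound[of "v t" A] m_eq by (simp add: r_def dot_square_norm)
      have "v t \<bullet> (Q *v F0') \<le> r * c" unfolding r_def c_eq by (rule norm_cauchy_schwarz)
      hence "N' t \<le> 2 * (a * r^3 + m * r^2 + r * c)"
        using t1 t2 by (simp add: N'_def ident inner_add_right)
      thus ?thesis by (simp add: r_def power3_eq_cube power2_eq_square algebra_simps)
    qed
    have Nnorm: "N t = norm (v t)^2" for t by (simp add: N_def dot_square_norm)
    show ?thesis
    proof (intro ballI impI conjI)
      fix t assume tJ: "t \<in> J" and t0: "t \<ge> 0"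
      show "vnormO Om (u t) = norm (v t)" "vnormO Om (u t) = norm (v t)" by (rule nv)+
      {
        assume h: "r_minus \<le> vnormO Om (u 0) \<and> vnormO Om (u 0) < r_plus"
        hence h': "r_minus \<le> r0" "r0 < r_plus" by (auto simp: r0nv)
        have r0nn: "r0 \<ge> 0" by (simp add: r0_def)
        have "N t \<le> r0^2"
        proof (rule barrier[OF J, of N N' "r0^2" "r_plus^2 - r0^2"])
          show "\<And>t. t \<in> J \<Longrightarrow> (N has_real_derivative N' t) (at t within J)" by (rule Nder)
          show "N 0 \<le> r0^2" by (simp add: Nnorm r0_def)
          show "r_plus^2 - r0^2 > 0" using h' r0nn by (simp add: power_strict_mono)
          show "t \<in> J" "t \<ge> 0" by fact+
          fix \<tau> assume "\<tau> \<in> J" "\<tau> \<ge> 0" "r0^2 < N \<tau>" "N \<tau> < r0^2 + (r_plus^2 - r0^2)"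
          hence q: "r0^2 < norm (v \<tau>)^2" "norm (v \<tau>)^2 < r_plus^2" by (auto simp: Nnorm)
          have "r0 < norm (v \<tau>)" using q(1) r0nn by (meson norm_ge_zero power_less_imp_less_base)
          moreover have "norm (v \<tau>) < r_plus" using q(2) rm0 rmp power_less_imp_less_base[of "norm (v \<tau>)" 2 r_plus] by linarith
          ultimately have "(norm (v \<tau>) - r_minus) > 0" "norm (v \<tau>) - r_plus < 0" "norm (v \<tau>) > 0" using h' r0nn by auto
          hence "a * ((norm (v \<tau>) - r_minus) * (norm (v \<tau>) - r_plus)) < 0" using apos
            by (simp add: mult_pos_neg)
          hence "norm (v \<tau>) * (a * norm (v \<tau>)^2 + m * norm (v \<tau>) + c) < 0"
            using \<open>norm (v \<tau>) > 0\<close> by (simp add: poly mult_pos_neg)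
          thus "N' \<tau> \<le> 0" using Nbound[of \<tau>] by simp
        qed
        hence "norm (v t)^2 \<le> r0^2" by (simp only: Nnorm)
        hence "norm (v t) \<le> r0" using r0nn by (rule power2_le_imp_le)
        thus "norm (v t) \<le> vnormO Om (u 0)" "vnormO Om (u 0) < r_plus" using h by (auto simp: r0nv)
      }
      {
        assume h: "0 \<le> vnormO Om (u 0) \<and> vnormO Om (u 0) < r_minus"
        hence h': "r0 < r_minus" by (auto simp: r0nv)
        have r0nn: "r0 \<ge> 0" by (simp add: r0_def)
        define K where "K = 2 * a * r_plus"
        define f where "f t = (N t - r_minus^2) * exp (K * t)" for t
        define f' where "f' t = N' t * exp (K * t) + (exp (K * t) * K) * (N t - r_minus^2)" for t
        have fder: "(f has_real_derivative f' t) (at t within J)" if "t \<in> J" for t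
        proof -
          have e: "((\<lambda>t. exp (K * t)) has_real_derivative exp (K * t) * K) (at t within J)"
            by (auto intro!: derivative_eq_intros)
          have n: "((\<lambda>t. N t - r_minus^2) has_real_derivative N' t) (at t within J)"
            using DERIV_diff[OF Nder[OF that] DERIV_const[of "r_minus^2"]] by simp
          show ?thesis unfolding f_def f'_def by (rule DERIV_mult[OF n e])
        qed
        have "r0^2 < r_minus^2" using h' r0nn by (intro power_strict_mono) auto
        hence b0: "f 0 < 0" by (simp add: f_def Nnorm r0_def)
        have negN: "N \<tau> < r_minus^2" if "f \<tau> < 0" for \<tau>
        proof (rule ccontr)
          assume "\<not> N \<tau> < r_minus^2"
          hence "f \<tau> \<ge> 0" unfolding f_def by (intro mult_nonneg_nonneg) auto
          thus False using that by simp
        qed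
        have rl: "norm (v \<tau>) < r_minus" if "N \<tau> < r_minus^2" for \<tau>
          using that rm0 power_less_imp_less_base[of "norm (v \<tau>)" 2 r_minus] by (simp add: Nnorm)
        have "f t \<le> f 0"
        proof (rule barrier[OF J, of f f' "f 0" "- f 0"])
          show "\<And>t. t \<in> J \<Longrightarrow> (f has_real_derivative f' t) (at t within J)" by (rule fder)
          show "f 0 \<le> f 0" by simp
          show "- f 0 > 0" using b0 by simp
          show "t \<in> J" "t \<ge> 0" by fact+
          fix \<tau> assume "\<tau> \<in> J" "\<tau> \<ge> 0" "f 0 < f \<tau>" "f \<tau> < f 0 + - f 0"
          hence "f \<tau> < 0" by simp
          hence "N \<tau> < r_minus^2" by (rule negN)
          hence rl: "norm (v \<tau>) < r_minus" by (rule rl)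
          define r where "r = norm (v \<tau>)"
          have rnn: "r \<ge> 0" by (simp add: r_def)
          have rp0: "r_plus > 0" using rm0 rmp by simp
          have e1: "(r - r_minus) * (r^2 + r_plus * r_minus) \<le> 0"
            using rl rnn rp0 rm0 by (intro mult_nonpos_nonneg) (auto simp: r_def)
          have "N' \<tau> + K * (N \<tau> - r_minus^2) \<le> 2 * (r * (a * r^2 + m * r + c)) + K * (r^2 - r_minus^2)"
            using Nbound[of \<tau>] by (simp add: r_def Nnorm)
          also have "\<dots> = 2 * a * ((r - r_minus) * (r^2 + r_plus * r_minus))"
          proof -
            have mc1: "m = - (a * (r_minus + r_plus))" using sumr by simp
            have mc2: "c = a * (r_minus * r_plus)" using prodr by simp
            show ?thesis by (simp only: mc1 mc2 K_def) (simp add: algebra_simps power2_eq_square)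
          qed
          also have "\<dots> \<le> 0" using e1 apos by (simp add: mult_nonneg_nonpos)
          finally have "N' \<tau> + K * (N \<tau> - r_minus^2) \<le> 0" .
          hence "exp (K * \<tau>) * (N' \<tau> + K * (N \<tau> - r_minus^2)) \<le> 0"
            by (simp add: mult_nonneg_nonpos)
          thus "f' \<tau> \<le> 0" by (simp add: f'_def algebra_simps)
        qed
        hence "f t < 0" using b0 by simp
        hence "N t < r_minus^2" by (rule negN)
        thus "norm (v t) < r_minus" by (rule rl)
      }
    qed
  qed
qed

end
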